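(* Let $a\in\mathbb{C}$, let $v=\{v_n\}_{n=1}^\infty\in\ell^1(\mathbb{N})$ be complex and $V=\mathrm{diag}(v_1,v_2,\dots)$. Then \[ \sigma_{\mathrm p}(J_a+V)\subset\{\pm2\}\cup\Big\{k+k^{-1}\ \Big|\ 0<|k|<1,\ |k^{-1}-k|\,|1-ak|\le\big(|1-ak|+|k-a|\big)\|v\|_{\ell^1}\Big\}. \]
   Context: $\mathbb{N}=\{1,2,\dots\}$. For $a\in\mathbb{C}$, $J_a$ is the operator on $\ell^2(\mathbb{N})$ with $(J_a\psi)_1=a\psi_1+\psi_2$ and $(J_a\psi)_n=\psi_{n-1}+\psi_{n+1}$ for $n\ge2$. $\sigma_{\mathrm p}$ denotes the set of eigenvalues. *)

theory Defs
  imports Complex_Main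
begin

text \<open>Sequences on \<open>\<nat> = {1,2,...}\<close> are represented as functions \<open>nat \<Rightarrow> complex\<close>;
  only the values at indices \<open>n \<ge> 1\<close> are relevant (the value at 0 is ignored).\<close>

definition in_ell2 :: "(nat \<Rightarrow> complex) \<Rightarrow> bool" where
  "in_ell2 \<psi> \<longleftrightarrow> summable (\<lambda>n. (norm (\<psi> (Suc n)))\<^sup>2)"

definition in_ell1 :: "(nat \<Rightarrow> complex) \<Rightarrow> bool" where
  "in_ell1 v \<longleftrightarrow> summable (\<lambda>n. norm (v (Suc n)))"

definition ell1_norm :: "(nat \<Rightarrow> complex) \<Rightarrow> real" where
  "ell1_norm v = (\<Sum>n. norm (v (Suc n)))"

definition JV_apply :: "complex \<Rightarrow> (nat \<Rightarrow> complex) \<Rightarrow> (nat \<Rightarrow> complex) \<Rightarrow> nat \<Rightarrow> complex" where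
  "JV_apply a v \<psi> n =
     (if n = 1 then a * \<psi> 1 + \<psi> 2 else \<psi> (n - 1) + \<psi> (n + 1)) + v n * \<psi> n"

definition point_spectrum_JV :: "complex \<Rightarrow> (nat \<Rightarrow> complex) \<Rightarrow> complex set" where
  "point_spectrum_JV a v =
     {z. \<exists>\<psi>. in_ell2 \<psi> \<and> (\<exists>n\<ge>1. \<psi> n \<noteq> 0) \<and> (\<forall>n\<ge>1. JV_apply a v \<psi> n = z * \<psi> n)}"

end

theory Submission
  imports Defs "HOL-Analysis.Analysis"
begin

definition Wr :: "(nat \<Rightarrow> complex) \<Rightarrow> complex \<Rightarrow> nat \<Rightarrow> complex" where
  "Wr p w n = w ^ n * p (Suc n) - w ^ Suc n * p n"

context
  fixes p v :: "nat \<Rightarrow> complex" and z :: complex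
  assumes rec: "\<And>n. p n + p (Suc (Suc n)) = (z - v (Suc n)) * p (Suc n)"
begin

lemma Wr_step:
  assumes "w * w' = 1" "z = w + w'"
  shows "Wr p w (Suc n) = Wr p w n - v (Suc n) * p (Suc n) * w ^ Suc n"
proof -
  have "w ^ Suc n * w' = w ^ n * (w * w')" by (simp add: algebra_simps)
  hence e: "w ^ n = w ^ Suc n * w'" using assms(1) by simp
  have 1: "Wr p w (Suc n) - Wr p w n = w ^ Suc n * (p n + p (Suc (Suc n))) - p (Suc n) * (w ^ Suc (Suc n) + w ^ n)"
    by (simp add: Wr_def algebra_simps)
  have 2: "w ^ Suc (Suc n) + w ^ n = w ^ Suc n * z" using e assms(2) by (simp add: algebra_simps)
  have "Wr p w (Suc n) - Wr p w n = w ^ Suc n * ((z - v (Suc n)) * p (Suc n)) - p (Suc n) * (w ^ Suc n * z)"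
    using 1 2 rec[of n] by simp
  thus ?thesis by (simp add: algebra_simps)
qed

lemma Wr_sum:
  assumes "w * w' = 1" "z = w + w'"
  shows "Wr p w n = Wr p w 0 - (\<Sum>j<n. v (Suc j) * p (Suc j) * w ^ Suc j)"
  by (induction n) (simp_all add: Wr_step[OF assms])

lemma Wr_sums:
  assumes "w * w' = 1" "z = w + w'" "norm w \<le> 1" "p \<longlonglongrightarrow> 0"
  shows "(\<lambda>j. v (Suc j) * p (Suc j) * w ^ Suc j) sums Wr p w 0"
proof -
  have np: "(\<lambda>n. norm (p n)) \<longlonglongrightarrow> 0" using assms(4) tendsto_norm_zero by blast
  hence "(\<lambda>n. norm (p (Suc n))) \<longlonglongrightarrow> 0" using LIMSEQ_Suc by blast
  hence g: "(\<lambda>n. norm (p (Suc n)) + norm (p n)) \<longlonglongrightarrow> 0" using np tendsto_add by fastforce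
  have "norm (Wr p w n) \<le> norm (p (Suc n)) + norm (p n)" for n
  proof -
    have a0: "norm (w ^ m) \<le> 1" for m
      using assms(3) by (simp add: norm_power power_le_one)
    have a: "norm (w ^ n) \<le> 1" "norm (w ^ Suc n) \<le> 1" using a0 by blast+
    have "norm (Wr p w n) \<le> norm (w ^ n * p (Suc n)) + norm (w ^ Suc n * p n)"
      unfolding Wr_def by (rule norm_triangle_ineq4)
    also have "\<dots> \<le> norm (p (Suc n)) + norm (p n)"
      unfolding norm_mult using a
      by (intro add_mono) (auto intro: mult_left_le_one_le)
    finally show ?thesis .
  qed
  hence "Wr p w \<longlonglongrightarrow> 0" by (intro Lim_null_comparison[OF _ g]) auto
  hence "(\<lambda>n. Wr p w 0 - Wr p w n) \<longlonglongrightarrow> Wr p w 0 - 0" by (intro tendsto_diff) auto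
  moreover have "Wr p w 0 - Wr p w n = (\<Sum>j<n. v (Suc j) * p (Suc j) * w ^ Suc j)" for n
    using Wr_sum[OF assms(1,2), of n] by simp
  ultimately show ?thesis unfolding sums_def by simp
qed

lemma Wr_tail:
  assumes "w * w' = 1" "z = w + w'" "norm w \<le> 1" "p \<longlonglongrightarrow> 0"
  shows "Wr p w n = (\<Sum>j. v (Suc (j + n)) * p (Suc (j + n)) * w ^ Suc (j + n))"
proof -
  have s: "summable (\<lambda>j. v (Suc j) * p (Suc j) * w ^ Suc j)" using Wr_sums[OF assms] sums_summable by blast
  have u: "Wr p w 0 = (\<Sum>j. v (Suc j) * p (Suc j) * w ^ Suc j)"
    using Wr_sums[OF assms] by (rule sums_unique)
  have "Wr p w 0 = (\<Sum>j. v (Suc (j + n)) * p (Suc (j + n)) * w ^ Suc (j + n)) + (\<Sum>j<n. v (Suc j) * p (Suc j) * w ^ Suc j)"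
    unfolding u by (rule suminf_split_initial_segment[OF s])
  thus ?thesis using Wr_sum[OF assms(1,2), of n] by simp
qed

lemma back_zero:
  assumes "\<forall>m\<ge>Suc N. p m = 0"
  shows "\<forall>m\<ge>1. p m = 0"
proof -
  have P: "p (Suc m) = 0 \<and> p (Suc (Suc m)) = 0" if "m \<le> N" for m
    using that
  proof (induction m rule: inc_induct)
    case base thus ?case using assms by auto
  next
    case (step n)
    have "p (Suc n) + p (Suc (Suc (Suc n))) = (z - v (Suc (Suc n))) * p (Suc (Suc n))" by (rule rec)
    thus ?case using step by simp
  qed
  show ?thesis
  proof (intro allI impI)
    fix m :: nat assume "1 \<le> m"
    then obtain m' where m: "m = Suc m'" by (cases m) auto
    show "p m = 0"
    proof (cases "m' \<le> N")
      case True thus ?thesis using P m by auto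
    next
      case False thus ?thesis using assms m by auto
    qed
  qed
qed

end

lemma exists_max_from:
  fixes p :: "nat \<Rightarrow> complex"
  assumes "p \<longlonglongrightarrow> 0" "m0 \<ge> L" "p m0 \<noteq> 0"
  shows "\<exists>n\<ge>L. \<forall>m\<ge>L. norm (p m) \<le> norm (p n)"
proof -
  have "(\<lambda>m. norm (p m)) \<longlonglongrightarrow> 0" using assms(1) tendsto_norm_zero by blast
  moreover have "0 < norm (p m0)" using assms(3) by simp
  ultimately have "eventually (\<lambda>m. norm (p m) < norm (p m0)) sequentially"
    using order_tendstoD(2) by blast
  then obtain N0 where N0: "\<forall>m\<ge>N0. norm (p m) < norm (p m0)" by (auto simp: eventually_sequentially)
  define A where "A = {L..max N0 m0}"
  have fA: "finite ((\<lambda>m. norm (p m)) ` A)" by (simp add: A_def)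
  have neA: "(\<lambda>m. norm (p m)) ` A \<noteq> {}" using assms(2) by (auto simp: A_def)
  obtain n where nA: "n \<in> A" and nM: "norm (p n) = Max ((\<lambda>m. norm (p m)) ` A)"
    using Max_in[OF fA neA] by auto
  have bA: "\<forall>m\<in>A. norm (p m) \<le> norm (p n)" using nM Max_ge[OF fA] by auto
  have m0A: "m0 \<in> A" using assms(2) by (auto simp: A_def)
  show ?thesis
  proof (intro exI conjI allI impI)
    show "L \<le> n" using nA by (auto simp: A_def)
    fix m assume "L \<le> m"
    show "norm (p m) \<le> norm (p n)"
    proof (cases "m \<in> A")
      case True thus ?thesis using bA by auto
    next
      case False
      hence "m \<ge> N0" using \<open>L \<le> m\<close> by (auto simp: A_def)
      thus ?thesis using N0 bA m0A by (meson less_imp_le order_trans)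
    qed
  qed
qed

lemma root_choice:
  fixes z :: complex
  shows "\<exists>k. k \<noteq> 0 \<and> norm k \<le> 1 \<and> z = k + inverse k"
proof -
  define s where "s = csqrt (z^2 - 4)"
  have s2: "s^2 = z^2 - 4" by (simp add: s_def)
  define k1 where "k1 = (z + s) / 2"
  define k2 where "k2 = (z - s) / 2"
  have "k1 * k2 = (z^2 - s^2) / 4" by (simp add: k1_def k2_def power2_eq_square field_simps)
  hence prod: "k1 * k2 = 1" using s2 by simp
  have sum: "z = k1 + k2" by (simp add: k1_def k2_def field_simps)
  have i1: "inverse k1 = k2" using prod by (rule inverse_unique)
  have i2: "inverse k2 = k1" using prod by (simp add: inverse_unique mult.commute)
  have nz: "k1 \<noteq> 0" "k2 \<noteq> 0" using prod by auto
  show ?thesis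
  proof (cases "norm k1 \<le> 1")
    case True thus ?thesis using nz i1 sum by blast
  next
    case False
    have "norm k2 = inverse (norm k1)" using i1 by (metis norm_inverse)
    hence "norm k2 \<le> 1" using False by (simp add: inverse_le_1_iff)
    thus ?thesis using nz i2 sum by (intro exI[of _ k2]) (auto simp: add.commute)
  qed
qed

lemma norm_suminf_bound:
  fixes f :: "nat \<Rightarrow> complex" and g :: "nat \<Rightarrow> real"
  assumes "summable g" "\<And>j. norm (f j) \<le> g j"
  shows "norm (suminf f) \<le> suminf g"
proof -
  have s: "summable (\<lambda>j. norm (f j))"
    using assms by (intro summable_norm_comparison_test[of f g]) auto
  have "norm (suminf f) \<le> (\<Sum>j. norm (f j))" using summable_norm[OF s] .
  also have "\<dots> \<le> suminf g" using s assms by (intro suminf_le) auto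
  finally show ?thesis .
qed

theorem corollary3p5:
  fixes a :: complex and v :: "nat \<Rightarrow> complex"
  assumes "in_ell1 v"
  shows "point_spectrum_JV a v \<subseteq>
    {2, -2} \<union> {k + inverse k | k. 0 < norm k \<and> norm k < 1 \<and>
       norm (inverse k - k) * norm (1 - a * k) \<le> (norm (1 - a * k) + norm (k - a)) * ell1_norm v}"
proof
  fix z assume "z \<in> point_spectrum_JV a v"
  then obtain \<psi> where l2: "in_ell2 \<psi>" and nz: "\<exists>n\<ge>1. \<psi> n \<noteq> 0"
    and eq: "\<forall>n\<ge>1. JV_apply a v \<psi> n = z * \<psi> n"
    unfolding point_spectrum_JV_def by blast
  define p where "p n = (if n = 0 then a * \<psi> 1 else \<psi> n)" for n
  have rec: "p n + p (Suc (Suc n)) = (z - v (Suc n)) * p (Suc n)" for n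
    using eq[rule_format, of "Suc n"]
    by (cases n) (auto simp: p_def JV_apply_def algebra_simps numeral_2_eq_2)
  have p0: "p 0 = a * p 1" by (simp add: p_def)
  have plim: "p \<longlonglongrightarrow> 0"
  proof -
    have "summable (\<lambda>n. (norm (\<psi> (Suc n)))\<^sup>2)" using l2 by (simp add: in_ell2_def)
    hence "(\<lambda>n. (norm (\<psi> (Suc n)))\<^sup>2) \<longlonglongrightarrow> 0" by (rule summable_LIMSEQ_zero)
    hence "(\<lambda>n. sqrt ((norm (\<psi> (Suc n)))\<^sup>2)) \<longlonglongrightarrow> sqrt 0" by (rule tendsto_real_sqrt)
    hence "(\<lambda>n. norm (p (Suc n))) \<longlonglongrightarrow> 0" by (simp add: p_def)
    hence "(\<lambda>n. p (Suc n)) \<longlonglongrightarrow> 0" by (rule tendsto_norm_zero_cancel)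
    thus ?thesis by (rule LIMSEQ_imp_Suc)
  qed
  have pnz: "\<exists>n\<ge>1. p n \<noteq> 0"
  proof -
    from nz obtain n where "n \<ge> 1" "\<psi> n \<noteq> 0" by blast
    thus ?thesis by (intro exI[of _ n]) (simp add: p_def)
  qed
  have vs: "summable (\<lambda>j. norm (v (Suc j)))" using assms by (simp add: in_ell1_def)
  have vsn: "ell1_norm v = (\<Sum>j. norm (v (Suc j)))" by (simp add: ell1_norm_def)
  show "z \<in> {2, -2} \<union> {k + inverse k | k. 0 < norm k \<and> norm k < 1 \<and>
       norm (inverse k - k) * norm (1 - a * k) \<le> (norm (1 - a * k) + norm (k - a)) * ell1_norm v}"
  proof (cases "z = 2 \<or> z = -2")
    case True thus ?thesis by auto
  next
    case False
    obtain k where k0: "k \<noteq> 0" and k1: "norm k \<le> 1" and zk: "z = k + inverse k"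
      using root_choice by blast
    define q where "q = inverse k"
    have kq: "k * q = 1" using k0 by (simp add: q_def)
    have kq': "q * k = 1" using k0 by (simp add: q_def)
    have zkq: "z = k + q" "z = q + k" using zk by (simp_all add: q_def)
    have qn: "q ^ n * k ^ n = 1" for n
      using kq' by (simp add: power_mult_distrib[symmetric])
    have ident: "(q - k) * p n = q ^ n * Wr p k n - k ^ n * Wr p q n" for n
    proof -
      have "q ^ n * Wr p k n - k ^ n * Wr p q n
          = (q ^ n * k ^ n) * p (Suc n) - (q ^ n * k ^ n) * k * p n
            - (q ^ n * k ^ n) * p (Suc n) + (q ^ n * k ^ n) * q * p n"
        by (simp add: Wr_def algebra_simps)
      also have "\<dots> = q * p n - k * p n" by (simp add: qn)
      finally show ?thesis by (simp add: algebra_simps)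
    qed
    have nk: "norm k < 1"
    proof (rule ccontr)
      assume "\<not> norm k < 1"
      hence nk: "norm k = 1" using k1 by simp
      hence nq: "norm q = 1" by (simp add: q_def norm_inverse)
      have "q \<noteq> k"
      proof
        assume "q = k"
        hence "(k - 1) * (k + 1) = 0" using kq by (simp add: algebra_simps)
        hence "k - 1 = 0 \<or> k + 1 = 0" by simp
        hence "k = 1 \<or> k = -1" by (auto simp: add_eq_0_iff2)
        thus False using False zk by auto
      qed
      hence d: "0 < norm (q - k)" by simp
      obtain N where N: "\<forall>n\<ge>N. norm (\<Sum>j. norm (v (Suc (j + n)))) < norm (q - k) / 2"
        using suminf_exist_split[OF _ vs, of "norm (q - k) / 2"] d by auto
      have zero: "\<forall>m\<ge>Suc N. p m = 0"
      proof (rule ccontr)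
        assume "\<not> (\<forall>m\<ge>Suc N. p m = 0)"
        then obtain m0 where m0: "m0 \<ge> Suc N" "p m0 \<noteq> 0" by auto
        obtain n where n: "n \<ge> Suc N" and nmax: "\<forall>m\<ge>Suc N. norm (p m) \<le> norm (p n)"
          using exists_max_from[OF plim m0(1) m0(2)] by blast
        define M where "M = norm (p n)"
        have "norm (p m0) \<le> M" using nmax m0(1) unfolding M_def by blast
        moreover have "0 < norm (p m0)" using m0(2) by simp
        ultimately have Mpos: "0 < M" by linarith
        define T where "T = (\<Sum>j. norm (v (Suc (j + n))))"
        have Tsum: "summable (\<lambda>j. norm (v (Suc (j + n))))"
          using summable_ignore_initial_segment[OF vs, of n] by simp
        have T0: "0 \<le> T" unfolding T_def using Tsum by (intro suminf_nonneg) auto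
        have "N \<le> n" using n by simp
        hence "norm T < norm (q - k) / 2" using N unfolding T_def by blast
        hence TN: "T < norm (q - k) / 2" using T0 by simp
        have bnd: "norm (Wr p w n) \<le> T * M" if "w * w' = 1" "z = w + w'" "norm w = 1" for w w'
        proof -
          have "Wr p w n = (\<Sum>j. v (Suc (j + n)) * p (Suc (j + n)) * w ^ Suc (j + n))"
            using Wr_tail[where p=p and v=v and z=z, OF rec that(1,2) _ plim] that(3) by simp
          also have "norm \<dots> \<le> (\<Sum>j. norm (v (Suc (j + n))) * M)"
          proof (rule norm_suminf_bound)
            show "summable (\<lambda>j. norm (v (Suc (j + n))) * M)" using Tsum by (rule summable_mult2)
            fix j
            have "norm (p (Suc (j + n))) \<le> M" using nmax n unfolding M_def by auto
            thus "norm (v (Suc (j + n)) * p (Suc (j + n)) * w ^ Suc (j + n)) \<le> norm (v (Suc (j + n))) * M"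
              using that(3) by (simp add: norm_mult norm_power mult_left_mono)
          qed
          also have "\<dots> = T * M" unfolding T_def using Tsum by (rule suminf_mult2[symmetric])
          finally show ?thesis .
        qed
        have "norm (q - k) * M = norm ((q - k) * p n)" by (simp add: M_def norm_mult)
        also have "\<dots> \<le> norm (q ^ n * Wr p k n) + norm (k ^ n * Wr p q n)"
          unfolding ident by (rule norm_triangle_ineq4)
        also have "\<dots> = norm (Wr p k n) + norm (Wr p q n)"
          using nk nq by (simp add: norm_mult norm_power)
        also have "\<dots> \<le> T * M + T * M"
          using bnd[OF kq zkq(1) nk] bnd[OF kq' zkq(2) nq] by linarith
        also have "\<dots> = (2 * T) * M" by simp
        also have "\<dots> < norm (q - k) * M" using TN Mpos by (intro mult_strict_right_mono) auto
        finally show False by simp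
      qed
      have "\<forall>m\<ge>1. p m = 0" using back_zero[where p=p and v=v and z=z, OF rec zero] .
      thus False using pnz by blast
    qed
    have ineq: "norm (q - k) * norm (1 - a * k) \<le> (norm (1 - a * k) + norm (k - a)) * ell1_norm v"
    proof -
      obtain m0 where m0: "m0 \<ge> 1" "p m0 \<noteq> 0" using pnz by blast
      obtain n where n1: "n \<ge> 1" and nmax: "\<forall>m\<ge>1. norm (p m) \<le> norm (p n)"
        using exists_max_from[OF plim m0(1) m0(2)] by blast
      define M where "M = norm (p n)"
      have "norm (p m0) \<le> M" using nmax m0(1) unfolding M_def by blast
      moreover have "0 < norm (p m0)" using m0(2) by simp
        ultimately have Mpos: "0 < M" by linarith
      have pb: "norm (p (Suc j)) \<le> M" for j using nmax unfolding M_def by auto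
      define G where "G j = v (Suc j) * p (Suc j)" for j
      have Gb: "norm (G j) \<le> norm (v (Suc j)) * M" for j
        using pb[of j] by (simp add: G_def norm_mult mult_left_mono)
      have nk1: "norm k \<le> 1" using nk by simp
      have kpow: "norm (k ^ m) \<le> 1" for m using nk1 by (simp add: norm_power power_le_one)
      have kGb: "norm (G j * k ^ m) \<le> norm (v (Suc j)) * M" for j m
      proof -
        have "norm (G j * k ^ m) = norm (G j) * norm (k ^ m)" by (simp add: norm_mult)
        also have "\<dots> \<le> norm (G j)" using kpow[of m] by (simp add: mult_right_le_one_le)
        finally show ?thesis using Gb[of j] by simp
      qed
      define T where "T = (\<Sum>j. norm (v (Suc (j + n))))"
      define S where "S = (\<Sum>j<n. norm (v (Suc j)))"
      have Tsum: "summable (\<lambda>j. norm (v (Suc (j + n))))"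
        using summable_ignore_initial_segment[OF vs, of n] by simp
      have TS: "T + S = ell1_norm v"
        unfolding T_def S_def vsn using suminf_split_initial_segment[OF vs, of n] by simp
      define A where "A = (\<Sum>j. G (j + n) * k ^ Suc j)"
      define B where "B = (\<Sum>j<n. G j * k ^ (n - Suc j))"
      have sk: "(\<lambda>j. v (Suc j) * p (Suc j) * k ^ Suc j) sums Wr p k 0"
        using Wr_sums[where p=p and v=v and z=z, OF rec kq zkq(1) nk1 plim] .
      have kWk: "q ^ n * Wr p k n = A"
      proof -
        have st: "summable (\<lambda>j. v (Suc (j + n)) * p (Suc (j + n)) * k ^ Suc (j + n))"
          using summable_ignore_initial_segment[OF sums_summable[OF sk], of n] by simp
        have "q ^ n * Wr p k n = q ^ n * (\<Sum>j. v (Suc (j + n)) * p (Suc (j + n)) * k ^ Suc (j + n))"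
          using Wr_tail[where p=p and v=v and z=z, OF rec kq zkq(1) nk1 plim] by simp
        also have "\<dots> = (\<Sum>j. q ^ n * (v (Suc (j + n)) * p (Suc (j + n)) * k ^ Suc (j + n)))"
          using suminf_mult[OF st] by simp
        also have "\<dots> = A" unfolding A_def
        proof (rule arg_cong[where f=suminf], rule ext)
          fix j
          have e: "k ^ Suc (j + n) = k ^ Suc j * k ^ n" unfolding power_add[symmetric] by simp
          have "q ^ n * (v (Suc (j + n)) * p (Suc (j + n)) * k ^ Suc (j + n))
              = G (j + n) * k ^ Suc j * (q ^ n * k ^ n)"
            unfolding e G_def by (simp add: ac_simps)
          thus "q ^ n * (v (Suc (j + n)) * p (Suc (j + n)) * k ^ Suc (j + n)) = G (j + n) * k ^ Suc j"
            by (simp add: qn)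
        qed
        finally show ?thesis .
      qed
      have normA: "norm A \<le> T * M"
      proof -
        have "norm A \<le> (\<Sum>j. norm (v (Suc (j + n))) * M)" unfolding A_def
        proof (rule norm_suminf_bound)
          show "summable (\<lambda>j. norm (v (Suc (j + n))) * M)" using Tsum by (rule summable_mult2)
          fix j show "norm (G (j + n) * k ^ Suc j) \<le> norm (v (Suc (j + n))) * M" by (rule kGb)
        qed
        also have "\<dots> = T * M" unfolding T_def using Tsum by (rule suminf_mult2[symmetric])
        finally show ?thesis .
      qed
      have kWq: "k ^ n * Wr p q n = k ^ n * Wr p q 0 - B"
      proof -
        have "Wr p q n = Wr p q 0 - (\<Sum>j<n. v (Suc j) * p (Suc j) * q ^ Suc j)"
          using Wr_sum[where p=p and v=v and z=z, OF rec kq' zkq(2)] .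
        hence "k ^ n * Wr p q n = k ^ n * Wr p q 0 - (\<Sum>j<n. k ^ n * (v (Suc j) * p (Suc j) * q ^ Suc j))"
          by (simp add: right_diff_distrib sum_distrib_left)
        also have "(\<Sum>j<n. k ^ n * (v (Suc j) * p (Suc j) * q ^ Suc j)) = B" unfolding B_def
        proof (rule sum.cong)
          fix j assume "j \<in> {..<n}"
          hence jn: "n - Suc j + Suc j = n" by simp
          have "k ^ (n - Suc j) * k ^ Suc j = k ^ (n - Suc j + Suc j)" by (rule power_add[symmetric])
          hence "k ^ n = k ^ (n - Suc j) * k ^ Suc j" unfolding jn by simp
          moreover have "k ^ Suc j * q ^ Suc j = 1" using qn[of "Suc j"] by (simp add: mult.commute)
          ultimately have kqj: "k ^ n * q ^ Suc j = k ^ (n - Suc j)" by (simp only: mult.assoc mult_1_right)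
          have "k ^ n * (v (Suc j) * p (Suc j) * q ^ Suc j) = v (Suc j) * p (Suc j) * (k ^ n * q ^ Suc j)"
            by (simp only: mult_ac)
          thus "k ^ n * (v (Suc j) * p (Suc j) * q ^ Suc j) = G j * k ^ (n - Suc j)"
            unfolding G_def kqj by simp
        qed simp
        finally show ?thesis .
      qed
      have normB: "norm B \<le> S * M"
      proof -
        have "norm B \<le> (\<Sum>j<n. norm (G j * k ^ (n - Suc j)))" unfolding B_def by (rule norm_sum)
        also have "\<dots> \<le> (\<Sum>j<n. norm (v (Suc j)) * M)" by (rule sum_mono) (rule kGb)
        also have "\<dots> = S * M" unfolding S_def by (rule sum_distrib_right[symmetric])
        finally show ?thesis .
      qed
      have Wk0: "Wr p k 0 = (1 - a * k) * p 1" by (simp add: Wr_def p0 algebra_simps)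
      have Wq0: "Wr p q 0 = (1 - q * a) * p 1" by (simp add: Wr_def p0 algebra_simps)
      have Wk0b: "norm (Wr p k 0) \<le> ell1_norm v * M"
      proof -
        have "Wr p k 0 = (\<Sum>j. G j * k ^ Suc j)" using sums_unique[OF sk] by (simp add: G_def)
        also have "norm \<dots> \<le> (\<Sum>j. norm (v (Suc j)) * M)"
        proof (rule norm_suminf_bound)
          show "summable (\<lambda>j. norm (v (Suc j)) * M)" using vs by (rule summable_mult2)
          fix j show "norm (G j * k ^ Suc j) \<le> norm (v (Suc j)) * M" by (rule kGb)
        qed
        also have "\<dots> = ell1_norm v * M" unfolding vsn using vs by (rule suminf_mult2[symmetric])
        finally show ?thesis .
      qed
      obtain n' where n': "n = Suc n'" using n1 by (cases n) auto
      have knq: "k ^ n * (1 - q * a) = k ^ (n - 1) * (k - a)"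
      proof -
        have "k ^ n * (1 - q * a) = k ^ n' * (k - (k * q) * a)" unfolding n' by (simp add: algebra_simps)
        thus ?thesis using kq n' by simp
      qed
      have e1: "k ^ n * Wr p q 0 = k ^ (n - 1) * (k - a) * p 1"
        unfolding Wq0 by (simp only: mult.assoc[symmetric] knq)
      have e2: "(q - k) * p n = A + B - k ^ (n - 1) * (k - a) * p 1"
        using ident[of n] kWk kWq e1 by simp
      have key: "(q - k) * (1 - a * k) * p n = (1 - a * k) * (A + B) - k ^ (n - 1) * (k - a) * Wr p k 0"
      proof -
        have "(q - k) * (1 - a * k) * p n = (1 - a * k) * ((q - k) * p n)" by (simp add: ac_simps)
        also have "\<dots> = (1 - a * k) * (A + B) - k ^ (n - 1) * (k - a) * ((1 - a * k) * p 1)"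
          unfolding e2 by (simp add: algebra_simps)
        finally show ?thesis unfolding Wk0 .
      qed
      have f2: "norm ((1 - a * k) * (A + B)) \<le> norm (1 - a * k) * (T * M + S * M)"
      proof -
        have "norm (A + B) \<le> T * M + S * M" using normA normB norm_triangle_ineq[of A B] by linarith
        thus ?thesis by (simp add: norm_mult mult_left_mono)
      qed
      have f3: "norm (k ^ (n - 1) * (k - a) * Wr p k 0) \<le> norm (k - a) * (ell1_norm v * M)"
      proof -
        have "norm (k ^ (n - 1) * (k - a) * Wr p k 0) = norm (k ^ (n - 1)) * (norm (k - a) * norm (Wr p k 0))"
          by (simp add: norm_mult)
        also have "\<dots> \<le> norm (k - a) * norm (Wr p k 0)"
          using kpow[of "n - 1"] by (simp add: mult_left_le_one_le)
        also have "\<dots> \<le> norm (k - a) * (ell1_norm v * M)" using Wk0b by (simp add: mult_left_mono)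
        finally show ?thesis .
      qed
      have "norm (q - k) * norm (1 - a * k) * M = norm ((q - k) * (1 - a * k) * p n)"
        by (simp add: M_def norm_mult)
      also have "\<dots> \<le> norm ((1 - a * k) * (A + B)) + norm (k ^ (n - 1) * (k - a) * Wr p k 0)"
        unfolding key by (rule norm_triangle_ineq4)
      also have "\<dots> \<le> norm (1 - a * k) * (T * M + S * M) + norm (k - a) * (ell1_norm v * M)"
        using f2 f3 by linarith
      also have "\<dots> = ((norm (1 - a * k) + norm (k - a)) * ell1_norm v) * M"
        unfolding TS[symmetric] by (simp add: algebra_simps)
      finally show ?thesis using Mpos by simp
    qed
    have "z \<in> {k + inverse k | k. 0 < norm k \<and> norm k < 1 \<and>
       norm (inverse k - k) * norm (1 - a * k) \<le> (norm (1 - a * k) + norm (k - a)) * ell1_norm v}"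
      unfolding mem_Collect_eq
    proof (intro exI[of _ k] conjI)
      show "z = k + inverse k" by (rule zk)
      show "0 < norm k" using k0 by simp
      show "norm k < 1" by (rule nk)
      show "norm (inverse k - k) * norm (1 - a * k) \<le> (norm (1 - a * k) + norm (k - a)) * ell1_norm v"
        using ineq unfolding q_def .
    qed
    thus ?thesis by (rule UnI2)
  qed
qed

end
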